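(* Let $\alpha<0$, $\theta>-\alpha$, and consider a mixture of BB models with mixing distribution for $N$; let $\mathbf Z^{(n)}$ have $K_n=k$ observed features. Then as $m\to\infty$, $K^{(n)}_m\mid\mathbf Z^{(n)}\xrightarrow{d}N'$ where $N'+k\overset d=N\mid\mathbf Z^{(n)}$. With $p_n(\theta,\alpha)=1-(\theta+\alpha)_n/(\theta)_n$: if $N\sim\mathrm{Poisson}(\lambda)$ then $N'\sim\mathrm{Poisson}(\lambda(1-p_n(\theta,\alpha)))$; if $N\sim\mathrm{NegBinomial}(n_0,\mu_0)$ then $$N'\sim\mathrm{NegBinomial}\Big(n_0+k,\frac{n_0+k}{n_0/\mu_0+p_n(\theta,\alpha)}\{1-p_n(\theta,\alpha)\}\Big).$$
   Context: $(x)_m=\Gamma(x+m)/\Gamma(x)$. The beta Bernoulli (BB) model with parameters $(N,\alpha,\theta)$ has exchangeable feature probability function (probability of any given ordered feature allocation of $[n]$ into $k$ nonempty sets of sizes $m_1,\dots,m_k$) $V^{\mathrm{BB}}_{n,k}(N)\prod_{\ell=1}^k(1-\alpha)_{m_\ell-1}(\theta+\alpha)_{n-m_\ell}$ with $V^{\mathrm{BB}}_{n,k}(N)=\binom Nk\{-\alpha/(\theta+\alpha)_n\}^k\{(\theta+\alpha)_n/(\theta)_n\}^N\mathbf 1\{0\le k\le N\}$. A mixture of BB models takes $N$ random with prior pmf $p_N$ and, given $N$, data from the BB model; its posterior is $P(N=y\mid\mathbf Z^{(n)})\propto p_N(y)\frac{y!}{(y-k)!}\big(\frac{(\theta+\alpha)_n}{(\theta)_n}\big)^y$,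 $y\ge k$. $K^{(n)}_m$ is the number of features displayed by individuals $n+1,\dots,n+m$ not among those observed in $\mathbf Z^{(n)}$. $\mathrm{NegBinomial}(n_0,\mu_0)$ has pmf $\binom{y+n_0-1}{y}p^{n_0}(1-p)^y$, $y\in\mathbb N_0$, $p=n_0/(\mu_0+n_0)$. *)

theory Defs
  imports "HOL-Probability.Probability"
begin

text \<open>Rising factorial (x)_m = pochhammer x m.  Ordered feature allocations of the
individuals {0..<n} are lists of nonempty subsets of {..<n}.\<close>

definition V_BB :: "real \<Rightarrow> real \<Rightarrow> nat \<Rightarrow> nat \<Rightarrow> nat \<Rightarrow> real" where
  "V_BB \<alpha> \<theta> n k N =
     (if k \<le> N then of_nat (N choose k) * (- \<alpha> / pochhammer (\<theta> + \<alpha>) n) ^ k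
        * (pochhammer (\<theta> + \<alpha>) n / pochhammer \<theta> n) ^ N else 0)"

definition efpf_BB :: "nat \<Rightarrow> real \<Rightarrow> real \<Rightarrow> nat \<Rightarrow> nat set list \<Rightarrow> real" where
  "efpf_BB N \<alpha> \<theta> n As =
     V_BB \<alpha> \<theta> n (length As) N *
     prod_list (map (\<lambda>A. pochhammer (1 - \<alpha>) (card A - 1) * pochhammer (\<theta> + \<alpha>) (n - card A)) As)"

definition efpf_mix :: "nat pmf \<Rightarrow> real \<Rightarrow> real \<Rightarrow> nat \<Rightarrow> nat set list \<Rightarrow> real" where
  "efpf_mix pN \<alpha> \<theta> n As = (\<Sum>N. pmf pN N * efpf_BB N \<alpha> \<theta> n As)"

definition post_N :: "nat pmf \<Rightarrow> real \<Rightarrow> real \<Rightarrow> nat \<Rightarrow> nat set list \<Rightarrow> nat \<Rightarrow> real" where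
  "post_N pN \<alpha> \<theta> n As y = pmf pN y * efpf_BB y \<alpha> \<theta> n As / efpf_mix pN \<alpha> \<theta> n As"

text \<open>Ordered allocations of [n+m] extending As (restriction to [n], dropping features
empty on [n], gives As) and having exactly j new features (features not displayed in [n]).\<close>
definition extensions :: "nat \<Rightarrow> nat \<Rightarrow> nat set list \<Rightarrow> nat \<Rightarrow> nat set list set" where
  "extensions n m As j =
     {Bs. length Bs = length As + j \<and> (\<forall>B\<in>set Bs. B \<noteq> {} \<and> B \<subseteq> {..<n+m}) \<and>
          map (\<lambda>B. B \<inter> {..<n}) (filter (\<lambda>B. B \<inter> {..<n} \<noteq> {}) Bs) = As}"

definition pred_K :: "nat pmf \<Rightarrow> real \<Rightarrow> real \<Rightarrow> nat \<Rightarrow> nat set list \<Rightarrow> nat \<Rightarrow> nat \<Rightarrow> real" where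
  "pred_K pN \<alpha> \<theta> n As m j =
     (\<Sum>Bs\<in>extensions n m As j. efpf_mix pN \<alpha> \<theta> (n + m) Bs) / efpf_mix pN \<alpha> \<theta> n As"

definition p_n :: "real \<Rightarrow> real \<Rightarrow> nat \<Rightarrow> real" where
  "p_n \<theta> \<alpha> n = 1 - pochhammer (\<theta> + \<alpha>) n / pochhammer \<theta> n"

definition negbin_pmf :: "real \<Rightarrow> real \<Rightarrow> nat \<Rightarrow> real" where
  "negbin_pmf n0 \<mu>0 y = (let p = n0 / (\<mu>0 + n0) in
     ((of_nat y + n0 - 1) gchoose y) * p powr n0 * (1 - p) ^ y)"

end

theory Submission
  imports Defs
begin



lemma summable_choose_pow:
  fixes q :: real
  assumes "0 \<le> q" "q < 1"
  shows "summable (\<lambda>N. real (N choose K) * q ^ N)"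
proof -
  have "\<bar>-q\<bar> < 1" using assms by simp
  from gen_binomial_real[OF this, of "- real (K+1)"]
  have "summable (\<lambda>r. (- real (K+1) gchoose r) * (-q) ^ r)" by (rule sums_summable)
  moreover have "(- real (K+1) gchoose r) * (-q) ^ r = real ((r + K) choose K) * q ^ r" for r
  proof -
    have "(- real (K+1) gchoose r) = (-1)^r * ((real (K+1) + real r - 1) gchoose r)"
      by (rule gbinomial_minus)
    also have "real (K+1) + real r - 1 = real (r + K)" by simp
    also have "(real (r+K) gchoose r) = real ((r+K) choose r)" by (simp add: binomial_gbinomial)
    also have "(r+K) choose r = (r+K) choose K" using binomial_symmetric[of r "r+K"] by simp
    finally have e: "(- real (K+1) gchoose r) = (-1)^r * real ((r+K) choose K)" .
    have "(-q)^r = (-1)^r * q^r" by (rule power_minus)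
    moreover have "((-1::real)^r) * (-1)^r = 1" by (simp add: power_mult_distrib[symmetric])
    ultimately show ?thesis unfolding e by (metis (no_types, lifting) mult.assoc mult.commute mult.left_neutral)
  qed
  ultimately have "summable (\<lambda>r. real ((r + K) choose K) * q ^ r)" by simp
  hence "summable (\<lambda>r. real ((r + K) choose K) * q ^ (r + K))"
    using summable_mult2[OF \<open>summable (\<lambda>r. real ((r + K) choose K) * q ^ r)\<close>, of "q^K"] by (simp add: power_add mult_ac)
  thus ?thesis by (subst summable_iff_shift[symmetric, of _ K])
qed

lemma pochhammer_strict_mono:
  fixes x y :: real
  assumes "0 < x" "x < y"
  shows "pochhammer x (Suc n) < pochhammer y (Suc n)"
proof -
  have le: "pochhammer x n \<le> pochhammer y n" for n
  proof (induction n)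
    case (Suc n)
    have "pochhammer x (Suc n) = (x + n) * pochhammer x n" by (rule pochhammer_rec')
    also have "\<dots> \<le> (y + n) * pochhammer y n"
      using Suc assms by (intro mult_mono) (auto intro: pochhammer_nonneg)
    finally show ?case by (simp add: pochhammer_rec')
  qed simp
  have "pochhammer x (Suc n) = (x + n) * pochhammer x n" by (rule pochhammer_rec')
  also have "\<dots> < (y + n) * pochhammer x n"
    using assms pochhammer_pos[of x n] by (intro mult_strict_right_mono) auto
  also have "\<dots> \<le> (y + n) * pochhammer y n"
    using le[of n] assms by (intro mult_left_mono) auto
  finally show ?thesis by (simp add: pochhammer_rec')
qed

lemma pochhammer_ratio_lim:
  fixes a b :: real
  assumes "0 < a" "a < b"
  shows "(\<lambda>m. pochhammer a m / pochhammer b m) \<longlonglongrightarrow> 0"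
proof -
  have gpos: "Gamma_series z m > 0" if "z > 0" for z :: real and m
    using that pochhammer_pos[of z "m+1"] by (simp add: Gamma_series_def)
  have eq: "pochhammer a (Suc m) / pochhammer b (Suc m) =
      exp ((a - b) * ln (real m)) * (Gamma_series b m / Gamma_series a m)" for m
  proof -
    have pa: "pochhammer a (m+1) = fact m * exp (a * ln (real m)) / Gamma_series a m"
      using gpos[of a m] assms pochhammer_pos[of a "m+1"] by (simp add: Gamma_series_def field_simps)
    have pb: "pochhammer b (m+1) = fact m * exp (b * ln (real m)) / Gamma_series b m"
      using gpos[of b m] assms pochhammer_pos[of b "m+1"] by (simp add: Gamma_series_def field_simps)
    show ?thesis using gpos[of a m] gpos[of b m] assms
      by (simp add: pa[simplified] pb[simplified] exp_diff left_diff_distrib field_simps)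
  qed
  have "(\<lambda>m. real m powr (a - b)) \<longlonglongrightarrow> 0"
    using assms by (intro tendsto_neg_powr filterlim_real_sequentially) auto
  moreover have "eventually (\<lambda>m. real m powr (a - b) = exp ((a - b) * ln (real m))) sequentially"
    using eventually_gt_at_top[of 0] by eventually_elim (simp add: powr_def mult.commute)
  ultimately have e0: "(\<lambda>m. exp ((a - b) * ln (real m))) \<longlonglongrightarrow> 0"
    using tendsto_cong by fastforce
  have "Gamma a \<noteq> 0" using assms by (auto simp: Gamma_eq_zero_iff elim!: nonpos_Ints_cases)
  hence "(\<lambda>m. Gamma_series b m / Gamma_series a m) \<longlonglongrightarrow> Gamma b / Gamma a"
    by (intro tendsto_divide Gamma_series_LIMSEQ)
  from tendsto_mult[OF e0 this]
  have "(\<lambda>m. pochhammer a (Suc m) / pochhammer b (Suc m)) \<longlonglongrightarrow> 0"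
    unfolding eq by simp
  thus ?thesis by (rule LIMSEQ_imp_Suc)
qed




lemma pow_vandermonde:
  fixes x y :: real
  assumes "finite X"
  shows "(\<Sum>C\<in>Pow X. pochhammer x (s + card C) * pochhammer y (t + card X - card C)) =
         pochhammer x s * pochhammer y t * pochhammer (x + y + s + t) (card X)"
  using assms
proof (induction X arbitrary: s t rule: finite_induct)
  case empty
  then show ?case by simp
next
  case (insert z X)
  let ?f = "\<lambda>C. pochhammer x (s + card C) * pochhammer y (t + card (insert z X) - card C)"
  have fin: "finite (Pow X)" "finite (insert z ` Pow X)" using insert by auto
  have disj: "Pow X \<inter> insert z ` Pow X = {}" using insert by auto
  have inj: "inj_on (insert z) (Pow X)" using insert unfolding inj_on_def by (metis PowD insert_ident subsetD)
  have cardC: "card C \<le> card X" if "C \<in> Pow X" for C using that insert card_mono by auto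
  have "(\<Sum>C\<in>Pow (insert z X). ?f C) = (\<Sum>C\<in>Pow X. ?f C) + (\<Sum>C\<in>insert z ` Pow X. ?f C)"
    unfolding Pow_insert by (rule sum.union_disjoint[OF fin disj])
  also have "(\<Sum>C\<in>insert z ` Pow X. ?f C) = (\<Sum>C\<in>Pow X. ?f (insert z C))"
    by (rule sum.reindex[OF inj, unfolded comp_def])
  also have "(\<Sum>C\<in>Pow X. ?f (insert z C)) =
      (\<Sum>C\<in>Pow X. pochhammer x (Suc s + card C) * pochhammer y (t + card X - card C))"
  proof (rule sum.cong[OF refl])
    fix C assume C: "C \<in> Pow X"
    hence "z \<notin> C" "finite C" using insert finite_subset by auto
    thus "?f (insert z C) = pochhammer x (Suc s + card C) * pochhammer y (t + card X - card C)"
      using insert by simp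
  qed
  also have "(\<Sum>C\<in>Pow X. ?f C) =
      (\<Sum>C\<in>Pow X. pochhammer x (s + card C) * pochhammer y (Suc t + card X - card C))"
  proof (rule sum.cong[OF refl])
    fix C assume C: "C \<in> Pow X"
    thus "?f C = pochhammer x (s + card C) * pochhammer y (Suc t + card X - card C)"
      using insert cardC[OF C] by (simp add: Suc_diff_le)
  qed
  also have "\<dots> + (\<Sum>C\<in>Pow X. pochhammer x (Suc s + card C) * pochhammer y (t + card X - card C))
     = pochhammer x s * pochhammer y (Suc t) * pochhammer (x + y + s + Suc t) (card X)
       + pochhammer x (Suc s) * pochhammer y t * pochhammer (x + y + Suc s + t) (card X)"
    by (simp only: insert.IH)
  also have "\<dots> = pochhammer x s * pochhammer y t * pochhammer (x + y + s + t) (card (insert z X))"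
  proof -
    let ?c = "x + y + real s + real t"
    have c1: "x + y + real s + real (Suc t) = ?c + 1" "x + y + real (Suc s) + real t = ?c + 1" by simp_all
    have "pochhammer ?c (card (insert z X)) = ?c * pochhammer (?c + 1) (card X)"
      using insert by (simp add: pochhammer_rec)
    thus ?thesis unfolding c1 pochhammer_Suc by (simp add: algebra_simps)
  qed
  finally show ?case .
qed




definition Gset :: "nat \<Rightarrow> nat \<Rightarrow> nat set \<Rightarrow> nat set set" where
  "Gset n m a = {B. B \<inter> {..<n} = a \<and> B \<subseteq> {..<n+m}}"
definition Hset :: "nat \<Rightarrow> nat \<Rightarrow> nat set set" where
  "Hset n m = {B. B \<noteq> {} \<and> B \<inter> {..<n} = {} \<and> B \<subseteq> {..<n+m}}"

lemma finite_Gset: "finite (Gset n m a)"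
  by (rule finite_subset[of _ "Pow {..<n+m}"]) (auto simp: Gset_def)
lemma finite_Hset: "finite (Hset n m)"
  by (rule finite_subset[of _ "Pow {..<n+m}"]) (auto simp: Hset_def)

lemma finite_ext: "finite (extensions n m As j)"
  by (rule finite_subset[OF _ finite_lists_length_eq[of "Pow {..<n+m}" "length As + j"]])
     (auto simp: extensions_def)

lemma ext_Nil: "[] \<in> extensions n m As j \<longleftrightarrow> As = [] \<and> j = 0"
  by (auto simp: extensions_def)

lemma ext_Cons:
  "B # Bs \<in> extensions n m As j \<longleftrightarrow>
     (B \<in> Hset n m \<and> j > 0 \<and> Bs \<in> extensions n m As (j - 1)) \<or>
     (\<exists>a As'. As = a # As' \<and> a \<noteq> {} \<and> B \<in> Gset n m a \<and> Bs \<in> extensions n m As' j)"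
proof
  assume H: "B # Bs \<in> extensions n m As j"
  show "(B \<in> Hset n m \<and> j > 0 \<and> Bs \<in> extensions n m As (j - 1)) \<or>
     (\<exists>a As'. As = a # As' \<and> a \<noteq> {} \<and> B \<in> Gset n m a \<and> Bs \<in> extensions n m As' j)"
  proof (cases "B \<inter> {..<n} = {}")
    case True
    let ?F = "map (\<lambda>B. B \<inter> {..<n}) (filter (\<lambda>B. B \<inter> {..<n} \<noteq> {}) Bs)"
    have F: "?F = As" using H True by (simp add: extensions_def)
    have "length As \<le> length Bs" unfolding F[symmetric] by (simp add: length_filter_le)
    hence "j > 0" using H by (simp add: extensions_def)
    thus ?thesis using H True F by (auto simp: extensions_def Hset_def)
  next
    case False
    then show ?thesis using H by (auto simp: extensions_def Gset_def)
  qed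
next
  assume "(B \<in> Hset n m \<and> j > 0 \<and> Bs \<in> extensions n m As (j - 1)) \<or>
     (\<exists>a As'. As = a # As' \<and> a \<noteq> {} \<and> B \<in> Gset n m a \<and> Bs \<in> extensions n m As' j)"
  thus "B # Bs \<in> extensions n m As j"
    by (auto simp: extensions_def Hset_def Gset_def)
qed

lemma sum_cons_image:
  fixes g :: "nat set \<Rightarrow> real"
  assumes "finite X" "finite Y"
  shows "(\<Sum>Bs\<in>(\<lambda>(B,Bs). B # Bs) ` (X \<times> Y). prod_list (map g Bs)) =
         (\<Sum>B\<in>X. g B) * (\<Sum>Bs\<in>Y. prod_list (map g Bs))"
proof -
  have inj: "inj_on (\<lambda>(B,Bs). B # Bs) (X \<times> Y)" by (auto simp: inj_on_def)
  have "(\<Sum>Bs\<in>(\<lambda>(B,Bs). B # Bs) ` (X \<times> Y). prod_list (map g Bs)) =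
        (\<Sum>(B,Bs)\<in>X \<times> Y. g B * prod_list (map g Bs))"
    by (subst sum.reindex[OF inj]) (simp add: case_prod_beta comp_def)
  also have "\<dots> = (\<Sum>B\<in>X. \<Sum>Bs\<in>Y. g B * prod_list (map g Bs))"
    by (rule sum.cartesian_product[symmetric])
  also have "\<dots> = (\<Sum>B\<in>X. g B) * (\<Sum>Bs\<in>Y. prod_list (map g Bs))"
    by (simp add: sum_product)
  finally show ?thesis .
qed

lemma ext_sum:
  fixes g :: "nat set \<Rightarrow> real"
  assumes "\<forall>a\<in>set As. a \<noteq> {}"
  shows "(\<Sum>Bs\<in>extensions n m As j. prod_list (map g Bs)) =
     real ((length As + j) choose j) * prod_list (map (\<lambda>a. \<Sum>B\<in>Gset n m a. g B) As) *
     (\<Sum>B\<in>Hset n m. g B) ^ j"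
  using assms
proof (induction As arbitrary: j)
  case Nil
  show ?case
  proof (induction j)
    case 0
    have "extensions n m [] 0 = {[]}"
      by (intro set_eqI, case_tac x) (auto simp: ext_Nil ext_Cons)
    then show ?case by simp
  next
    case (Suc j)
    have "extensions n m [] (Suc j) = (\<lambda>(B,Bs). B # Bs) ` (Hset n m \<times> extensions n m [] j)"
      by (intro set_eqI, case_tac x) (auto simp: ext_Nil ext_Cons)
    then show ?case using Suc
      by (simp add: sum_cons_image finite_Hset finite_ext)
  qed
next
  case (Cons a As)
  hence a: "a \<noteq> {}" and As: "\<forall>a\<in>set As. a \<noteq> {}" by auto
  note IH = Cons.IH[OF As]
  let ?G = "\<lambda>a. \<Sum>B\<in>Gset n m a. g B" and ?H = "\<Sum>B\<in>Hset n m. g B"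
  have disj: "Gset n m a \<inter> Hset n m = {}" using a by (auto simp: Gset_def Hset_def)
  show ?case
  proof (induction j)
    case 0
    have "extensions n m (a # As) 0 = (\<lambda>(B,Bs). B # Bs) ` (Gset n m a \<times> extensions n m As 0)"
      using a by (intro set_eqI, case_tac x) (auto simp: ext_Nil ext_Cons)
    then show ?case using IH[of 0]
      by (simp add: sum_cons_image finite_Gset finite_ext)
  next
    case (Suc j)
    have eq: "extensions n m (a # As) (Suc j) =
        (\<lambda>(B,Bs). B # Bs) ` (Gset n m a \<times> extensions n m As (Suc j)) \<union>
        (\<lambda>(B,Bs). B # Bs) ` (Hset n m \<times> extensions n m (a # As) j)"
      using a by (intro set_eqI, case_tac x) (auto simp: ext_Nil ext_Cons)
    have d2: "(\<lambda>(B,Bs). B # Bs) ` (Gset n m a \<times> extensions n m As (Suc j)) \<inter>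
        (\<lambda>(B,Bs). B # Bs) ` (Hset n m \<times> extensions n m (a # As) j) = {}"
      using disj by auto
    have "(\<Sum>Bs\<in>extensions n m (a # As) (Suc j). prod_list (map g Bs)) =
       ?G a * (\<Sum>Bs\<in>extensions n m As (Suc j). prod_list (map g Bs)) +
       ?H * (\<Sum>Bs\<in>extensions n m (a # As) j. prod_list (map g Bs))"
      unfolding eq
      by (subst sum.union_disjoint[OF _ _ d2])
         (simp_all add: sum_cons_image finite_Gset finite_Hset finite_ext)
    also have "\<dots> = ?G a * (real ((length As + Suc j) choose Suc j) * prod_list (map ?G As) * ?H ^ Suc j)
        + ?H * (real ((length (a # As) + j) choose j) * prod_list (map ?G (a # As)) * ?H ^ j)"
      using IH[of "Suc j"] Suc by simp
    also have "\<dots> = (real ((length As + Suc j) choose Suc j) + real ((length As + Suc j) choose j)) *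
         (?G a * prod_list (map ?G As) * ?H ^ Suc j)"
      by (simp add: algebra_simps del: binomial_Suc_Suc)
    also have "real ((length As + Suc j) choose Suc j) + real ((length As + Suc j) choose j) =
        real ((length (a # As) + Suc j) choose Suc j)"
      by simp
    finally show ?case by (simp add: algebra_simps del: binomial_Suc_Suc)
  qed
qed


definition gB :: "real \<Rightarrow> real \<Rightarrow> nat \<Rightarrow> nat set \<Rightarrow> real" where
  "gB \<alpha> \<theta> M B = pochhammer (1 - \<alpha>) (card B - 1) * pochhammer (\<theta> + \<alpha>) (M - card B)"

lemma Gset_image: "a \<subseteq> {..<n} \<Longrightarrow> Gset n m a = (\<lambda>C. a \<union> C) ` Pow {n..<n+m}"
proof (intro set_eqI iffI)
  fix B assume a: "a \<subseteq> {..<n}" and B: "B \<in> Gset n m a"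
  hence "B = a \<union> (B - {..<n})" "B - {..<n} \<in> Pow {n..<n+m}"
    by (auto simp: Gset_def)
  thus "B \<in> (\<lambda>C. a \<union> C) ` Pow {n..<n+m}" by blast
qed (auto simp: Gset_def)

lemma G_eval:
  assumes "a \<noteq> {}" "a \<subseteq> {..<n}"
  shows "(\<Sum>B\<in>Gset n m a. gB \<alpha> \<theta> (n+m) B) = gB \<alpha> \<theta> n a * pochhammer (\<theta> + n) m"
proof -
  have fa: "finite a" using assms finite_subset by blast
  have ca: "card a \<ge> 1" using assms fa by (simp add: Suc_le_eq card_gt_0_iff)
  have cn: "card a \<le> n" using card_mono[OF _ assms(2)] by simp
  have inj: "inj_on (\<lambda>C. a \<union> C) (Pow {n..<n+m})"
  proof (rule inj_onI)
    fix C D assume "C \<in> Pow {n..<n+m}" "D \<in> Pow {n..<n+m}" "a \<union> C = a \<union> D"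
    moreover have "a \<inter> {n..<n+m} = {}" using assms(2) by auto
    ultimately show "C = D" by blast
  qed
  have "(\<Sum>B\<in>Gset n m a. gB \<alpha> \<theta> (n+m) B) = (\<Sum>C\<in>Pow {n..<n+m}. gB \<alpha> \<theta> (n+m) (a \<union> C))"
    unfolding Gset_image[OF assms(2)] by (subst sum.reindex[OF inj]) simp
  also have "\<dots> = (\<Sum>C\<in>Pow {n..<n+m}. pochhammer (1 - \<alpha>) ((card a - 1) + card C) *
        pochhammer (\<theta> + \<alpha>) ((n - card a) + card {n..<n+m} - card C))"
  proof (rule sum.cong[OF refl])
    fix C assume C: "C \<in> Pow {n..<n+m}"
    have "finite C" using C finite_subset by blast
    moreover have "a \<inter> C = {}" using C assms(2) by (force simp: subset_iff)
    ultimately have "card (a \<union> C) = card a + card C" using fa by (simp add: card_Un_disjoint)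
    moreover have "card C \<le> m" using C card_mono[of "{n..<n+m}" C] by auto
    ultimately show "gB \<alpha> \<theta> (n+m) (a \<union> C) = pochhammer (1 - \<alpha>) ((card a - 1) + card C) *
        pochhammer (\<theta> + \<alpha>) ((n - card a) + card {n..<n+m} - card C)"
      using ca cn unfolding gB_def by (simp add: algebra_simps)
  qed
  also have "\<dots> = pochhammer (1 - \<alpha>) (card a - 1) * pochhammer (\<theta> + \<alpha>) (n - card a) *
      pochhammer (1 - \<alpha> + (\<theta> + \<alpha>) + real (card a - 1) + real (n - card a)) (card {n..<n+m})"
    by (rule pow_vandermonde) simp
  also have "1 - \<alpha> + (\<theta> + \<alpha>) + real (card a - 1) + real (n - card a) = \<theta> + n"
    using ca cn by (simp add: of_nat_diff)
  finally show ?thesis by (simp add: gB_def)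
qed

lemma H_eval:
  "- \<alpha> * (\<Sum>B\<in>Hset n m. gB \<alpha> \<theta> (n+m) B) =
     pochhammer (\<theta> + \<alpha>) n * pochhammer (\<theta> + n) m - pochhammer (\<theta> + \<alpha>) (n + m)"
proof -
  let ?f = "\<lambda>C. pochhammer (- \<alpha>) (0 + card C) * pochhammer (\<theta> + \<alpha>) (n + card {n..<n+m} - card C)"
  have Hs: "Hset n m = Pow {n..<n+m} - {{}}" by (auto simp: Hset_def subset_iff disjoint_iff not_less)
  have "- \<alpha> * (\<Sum>B\<in>Hset n m. gB \<alpha> \<theta> (n+m) B) = (\<Sum>C\<in>Pow {n..<n+m} - {{}}. ?f C)"
    unfolding Hs sum_distrib_left
  proof (rule sum.cong[OF refl])
    fix C assume C: "C \<in> Pow {n..<n+m} - {{}}"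
    hence "finite C" "C \<noteq> {}" using finite_subset by auto
    hence "card C = Suc (card C - 1)" by (simp add: card_gt_0_iff)
    hence "pochhammer (- \<alpha>) (card C) = - \<alpha> * pochhammer (1 - \<alpha>) (card C - 1)"
      by (metis pochhammer_rec diff_conv_add_uminus add.commute)
    thus "- \<alpha> * gB \<alpha> \<theta> (n+m) C = ?f C" by (simp add: gB_def)
  qed
  also have "\<dots> = (\<Sum>C\<in>Pow {n..<n+m}. ?f C) - ?f {}"
    by (subst sum_diff1) auto
  also have "(\<Sum>C\<in>Pow {n..<n+m}. ?f C) =
     pochhammer (- \<alpha>) 0 * pochhammer (\<theta> + \<alpha>) n *
       pochhammer (- \<alpha> + (\<theta> + \<alpha>) + real 0 + real n) (card {n..<n+m})"
    by (rule pow_vandermonde) simp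
  finally show ?thesis by simp
qed





lemma summable_pmf_nat: "summable (\<lambda>N. pmf (pN::nat pmf) N)"
  using pmf_abs_summable[of pN UNIV] by (simp add: abs_summable_on_nat_iff')

lemma efpf_BB_eq: "efpf_BB N \<alpha> \<theta> M Bs = V_BB \<alpha> \<theta> M (length Bs) N * prod_list (map (gB \<alpha> \<theta> M) Bs)"
  unfolding efpf_BB_def gB_def by simp

lemma PQ_facts:
  fixes \<alpha> \<theta> :: real
  assumes "\<alpha> < 0" "\<theta> > - \<alpha>"
  shows "pochhammer (\<theta> + \<alpha>) M > 0" "pochhammer \<theta> M > 0"
    "pochhammer (\<theta> + \<alpha>) M \<le> pochhammer \<theta> M"
    "M \<ge> 1 \<Longrightarrow> pochhammer (\<theta> + \<alpha>) M < pochhammer \<theta> M"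
proof -
  show "pochhammer (\<theta> + \<alpha>) M > 0" "pochhammer \<theta> M > 0" using assms by (auto intro!: pochhammer_pos)
  show s: "M \<ge> 1 \<Longrightarrow> pochhammer (\<theta> + \<alpha>) M < pochhammer \<theta> M"
    using pochhammer_strict_mono[of "\<theta> + \<alpha>" \<theta> "M - 1"] assms by simp
  show "pochhammer (\<theta> + \<alpha>) M \<le> pochhammer \<theta> M"
    using s by (cases M) auto
qed

lemma V_BB_nonneg:
  assumes "\<alpha> < 0" "\<theta> > - \<alpha>"
  shows "V_BB \<alpha> \<theta> M K N \<ge> 0"
proof -
  note PQ = PQ_facts[OF assms, of M]
  have "0 \<le> - \<alpha> / pochhammer (\<theta> + \<alpha>) M" using PQ assms by (auto simp: divide_nonpos_pos)
  moreover have "0 \<le> pochhammer (\<theta> + \<alpha>) M / pochhammer \<theta> M" using PQ by auto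
  ultimately show ?thesis unfolding V_BB_def by auto
qed

lemma V_summable:
  fixes \<alpha> \<theta> :: real
  assumes "\<alpha> < 0" "\<theta> > - \<alpha>" "M \<ge> 1 \<or> K = 0"
  shows "summable (\<lambda>N. pmf pN N * V_BB \<alpha> \<theta> M K N)"
proof -
  let ?P = "pochhammer (\<theta> + \<alpha>) M" and ?Q = "pochhammer \<theta> M"
  note PQ = PQ_facts[OF assms(1,2), of M]
  have qle: "?P / ?Q \<le> 1" "?P / ?Q \<ge> 0" using PQ by auto
  show ?thesis
  proof (cases "K = 0")
    case True
    show ?thesis
    proof (rule summable_comparison_test'[OF summable_pmf_nat])
      fix N
      have "V_BB \<alpha> \<theta> M K N = (?P / ?Q) ^ N" using True by (simp add: V_BB_def)
      moreover have "(?P / ?Q) ^ N \<le> 1" "(?P / ?Q) ^ N \<ge> 0" using qle by (auto simp: power_le_one)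
      ultimately show "norm (pmf pN N * V_BB \<alpha> \<theta> M K N) \<le> pmf pN N"
        by (simp add: abs_mult mult_left_le)
    qed
  next
    case False
    hence M: "M \<ge> 1" using assms by auto
    have q1: "?P / ?Q < 1" using PQ(4)[OF M] PQ by simp
    have sm: "summable (\<lambda>N. (- \<alpha> / ?P) ^ K * (real (N choose K) * (?P / ?Q) ^ N))"
      by (rule summable_mult[OF summable_choose_pow]) (use q1 qle in auto)
    show ?thesis
    proof (rule summable_comparison_test'[OF sm])
      fix N
      have v: "V_BB \<alpha> \<theta> M K N \<le> (- \<alpha> / ?P) ^ K * (real (N choose K) * (?P / ?Q) ^ N)"
      proof -
        have "0 \<le> - \<alpha> / ?P" using PQ assms by (auto simp: divide_nonpos_pos)
        moreover have "0 \<le> ?P / ?Q" using PQ by auto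
        ultimately show ?thesis unfolding V_BB_def by (auto simp: mult_ac)
      qed
      have "norm (pmf pN N * V_BB \<alpha> \<theta> M K N) = pmf pN N * V_BB \<alpha> \<theta> M K N"
        using V_BB_nonneg[OF assms(1,2)] by (simp add: abs_mult)
      also have "\<dots> \<le> 1 * V_BB \<alpha> \<theta> M K N"
        by (rule mult_right_mono[OF pmf_le_1 V_BB_nonneg[OF assms(1,2)]])
      finally show "norm (pmf pN N * V_BB \<alpha> \<theta> M K N) \<le> (- \<alpha> / ?P) ^ K * (real (N choose K) * (?P / ?Q) ^ N)"
        using v by simp
    qed
  qed
qed




lemma term_identity:
  fixes c P R Q Q' :: real
  assumes pos: "c > 0" "P > 0" "R > 0" "Q > 0" "Q' > 0" and N: "k + j \<le> N"
  shows "real (N choose (k+j)) * (c/(P*R))^(k+j) * ((P*R)/(Q*Q'))^N * real ((k+j) choose j) * Q'^k * (P*(Q'-R)/c)^j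
      = real (N choose k) * (c/P)^k * (P/Q)^N * (real ((N-k) choose j) * ((Q'-R)/Q')^j * (R/Q')^(N-(k+j)))"
proof -
  obtain r where r: "N = k + j + r" using N le_Suc_ex by blast
  have b: "real (N choose (k+j)) * real ((k+j) choose j) = real (N choose k) * real ((N-k) choose j)"
  proof -
    have "(N choose (k+j)) * ((k+j) choose k) = (N choose k) * ((N - k) choose (k + j - k))"
      by (rule choose_mult) (use N in auto)
    moreover have "(k+j) choose k = (k+j) choose j" using binomial_symmetric[of k "k+j"] by simp
    ultimately show ?thesis by (metis add_diff_cancel_left' of_nat_mult)
  qed
  have "(c/(P*R))^(k+j) * ((P*R)/(Q*Q'))^N * Q'^k * (P*(Q'-R)/c)^j
      = (c/P)^k * (P/Q)^N * (((Q'-R)/Q')^j * (R/Q')^(N-(k+j)))"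
  proof -
    have "(P*(Q'-R)/c)^j = P^j * (Q'-R)^j / c^j" by (simp add: power_mult_distrib power_divide)
    thus ?thesis using pos unfolding r by (simp add: power_add power_mult_distrib power_divide field_simps)
  qed
  hence "real (N choose (k+j)) * real ((k+j) choose j) * ((c/(P*R))^(k+j) * ((P*R)/(Q*Q'))^N * Q'^k * (P*(Q'-R)/c)^j)
      = real (N choose k) * real ((N-k) choose j) * ((c/P)^k * (P/Q)^N * (((Q'-R)/Q')^j * (R/Q')^(N-(k+j))))"
    unfolding b by simp
  thus ?thesis by (simp add: mult_ac)
qed




lemma binom_term_le1:
  fixes \<rho> :: real
  assumes "0 \<le> \<rho>" "\<rho> \<le> 1" "j \<le> a"
  shows "real (a choose j) * (1 - \<rho>)^j * \<rho>^(a - j) \<le> 1"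
proof -
  have "real (a choose j) * (1 - \<rho>)^j * \<rho>^(a - j) \<le> (\<Sum>i\<le>a. real (a choose i) * (1 - \<rho>)^i * \<rho>^(a - i))"
    by (rule member_le_sum[where f = "\<lambda>i. real (a choose i) * (1 - \<rho>)^i * \<rho>^(a - i)"]) (use assms in auto)
  also have "\<dots> = ((1 - \<rho>) + \<rho>)^a" by (rule binomial_ring[symmetric])
  finally show ?thesis by simp
qed

lemma prod_list_map_scale:
  fixes f g :: "'a \<Rightarrow> real"
  assumes "\<forall>a\<in>set As. f a = g a * x"
  shows "prod_list (map f As) = prod_list (map g As) * x ^ length As"
  using assms by (induction As) (auto simp: algebra_simps)




lemma E_facts:
  fixes \<alpha> \<theta> :: real
  assumes a: "\<alpha> < 0" "\<theta> > - \<alpha>"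
    and As: "\<forall>A\<in>set As. A \<noteq> {} \<and> A \<subseteq> {..<n}"
  shows "summable (\<lambda>N. pmf pN N * V_BB \<alpha> \<theta> n (length As) N)"
    "efpf_mix pN \<alpha> \<theta> n As = (\<Sum>N. pmf pN N * V_BB \<alpha> \<theta> n (length As) N) * prod_list (map (gB \<alpha> \<theta> n) As)"
    "post_N pN \<alpha> \<theta> n As N = pmf pN N * V_BB \<alpha> \<theta> n (length As) N * prod_list (map (gB \<alpha> \<theta> n) As) / efpf_mix pN \<alpha> \<theta> n As"
proof -
  have "n \<ge> 1 \<or> length As = 0"
  proof (cases "n = 0")
    case True
    hence "As = []" using As by (cases As) auto
    thus ?thesis by simp
  qed simp
  thus s: "summable (\<lambda>N. pmf pN N * V_BB \<alpha> \<theta> n (length As) N)" by (rule V_summable[OF a])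
  show "efpf_mix pN \<alpha> \<theta> n As = (\<Sum>N. pmf pN N * V_BB \<alpha> \<theta> n (length As) N) * prod_list (map (gB \<alpha> \<theta> n) As)"
    unfolding efpf_mix_def efpf_BB_eq by (subst suminf_mult2[OF s]) (simp add: mult.assoc)
  show "post_N pN \<alpha> \<theta> n As N = pmf pN N * V_BB \<alpha> \<theta> n (length As) N * prod_list (map (gB \<alpha> \<theta> n) As) / efpf_mix pN \<alpha> \<theta> n As"
    unfolding post_N_def efpf_BB_eq by (simp add: mult.assoc)
qed

lemma post_summable:
  fixes \<alpha> \<theta> :: real
  assumes a: "\<alpha> < 0" "\<theta> > - \<alpha>"
    and As: "\<forall>A\<in>set As. A \<noteq> {} \<and> A \<subseteq> {..<n}"
  shows "summable (post_N pN \<alpha> \<theta> n As)"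
proof -
  have "summable (\<lambda>N. pmf pN N * V_BB \<alpha> \<theta> n (length As) N * prod_list (map (gB \<alpha> \<theta> n) As) / efpf_mix pN \<alpha> \<theta> n As)"
    by (intro summable_divide summable_mult2 E_facts(1)[OF a As])
  moreover have "post_N pN \<alpha> \<theta> n As = (\<lambda>N. pmf pN N * V_BB \<alpha> \<theta> n (length As) N * prod_list (map (gB \<alpha> \<theta> n) As) / efpf_mix pN \<alpha> \<theta> n As)"
    by (rule ext) (rule E_facts(3)[OF a As])
  ultimately show ?thesis by simp
qed

lemma gB_pos:
  assumes "\<alpha> < 0" "\<theta> > - \<alpha>"
  shows "gB \<alpha> \<theta> M B > 0"
  using assms unfolding gB_def by (auto intro!: mult_pos_pos pochhammer_pos)

lemma post_nonneg:
  fixes \<alpha> \<theta> :: real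
  assumes a: "\<alpha> < 0" "\<theta> > - \<alpha>"
    and As: "\<forall>A\<in>set As. A \<noteq> {} \<and> A \<subseteq> {..<n}" and E: "efpf_mix pN \<alpha> \<theta> n As > 0"
  shows "post_N pN \<alpha> \<theta> n As N \<ge> 0"
proof -
  have "prod_list (map (gB \<alpha> \<theta> n) As) \<ge> 0"
    by (induction As) (auto intro!: mult_nonneg_nonneg less_imp_le[OF gB_pos[OF a]])
  thus ?thesis unfolding E_facts(3)[OF a As] using E V_BB_nonneg[OF a]
    by (auto intro!: divide_nonneg_pos mult_nonneg_nonneg)
qed




definition wfun :: "real \<Rightarrow> real \<Rightarrow> nat \<Rightarrow> nat \<Rightarrow> nat \<Rightarrow> nat \<Rightarrow> nat \<Rightarrow> real" where
  "wfun \<alpha> \<theta> n k j m N = (if k + j \<le> N then real ((N - k) choose j) *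
     ((pochhammer (\<theta> + n) m - pochhammer (\<theta> + \<alpha> + n) m) / pochhammer (\<theta> + n) m) ^ j *
     (pochhammer (\<theta> + \<alpha> + n) m / pochhammer (\<theta> + n) m) ^ (N - (k + j)) else 0)"

lemma pred_K_repr:
  fixes \<alpha> \<theta> :: real
  assumes a: "\<alpha> < 0" "\<theta> > - \<alpha>"
    and As: "\<forall>A\<in>set As. A \<noteq> {} \<and> A \<subseteq> {..<n}" and m: "m \<ge> 1"
  shows "pred_K pN \<alpha> \<theta> n As m j = (\<Sum>N. post_N pN \<alpha> \<theta> n As N * wfun \<alpha> \<theta> n (length As) j m N)"
proof -
  define k where "k = length As"
  define K where "K = k + j"
  define M where "M = n + m"
  define c where "c = - \<alpha>"
  define P where "P = pochhammer (\<theta> + \<alpha>) n"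
  define Q where "Q = pochhammer \<theta> n"
  define R where "R = pochhammer (\<theta> + \<alpha> + n) m"
  define Q' where "Q' = pochhammer (\<theta> + n) m"
  define E where "E = efpf_mix pN \<alpha> \<theta> n As"
  define Pg where "Pg = prod_list (map (gB \<alpha> \<theta> n) As)"
  define H where "H = (\<Sum>B\<in>Hset n m. gB \<alpha> \<theta> (n+m) B)"
  define Ws where "Ws = (\<Sum>N. pmf pN N * V_BB \<alpha> \<theta> M K N)"
  have pos: "c > 0" "P > 0" "Q > 0" "R > 0" "Q' > 0"
    using a by (auto simp: c_def P_def Q_def R_def Q'_def intro!: pochhammer_pos)
  have PM: "pochhammer (\<theta> + \<alpha>) M = P * R" unfolding M_def P_def R_def by (simp add: pochhammer_product' add.assoc)
  have QM: "pochhammer \<theta> M = Q * Q'" unfolding M_def Q_def Q'_def by (simp add: pochhammer_product')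
  have Wsum: "summable (\<lambda>N. pmf pN N * V_BB \<alpha> \<theta> M K N)"
    by (rule V_summable[OF a]) (use m in \<open>simp add: M_def\<close>)
  have efm: "efpf_mix pN \<alpha> \<theta> M Bs = Ws * prod_list (map (gB \<alpha> \<theta> M) Bs)"
    if "Bs \<in> extensions n m As j" for Bs
  proof -
    have "length Bs = K" using that by (simp add: extensions_def K_def k_def)
    thus ?thesis unfolding efpf_mix_def efpf_BB_eq Ws_def
      by (subst suminf_mult2[OF Wsum]) (simp add: mult.assoc)
  qed
  have AsNE: "\<forall>a\<in>set As. a \<noteq> {}" using As by auto
  have Gs: "prod_list (map (\<lambda>a. \<Sum>B\<in>Gset n m a. gB \<alpha> \<theta> (n+m) B) As) = Pg * Q' ^ k"
    unfolding Pg_def k_def Q'_def using As by (intro prod_list_map_scale) (simp add: G_eval)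
  have Hv: "H = P * (Q' - R) / c"
    using H_eval[of \<alpha> \<theta> n m] PM pos unfolding H_def P_def Q'_def c_def M_def
    by (simp add: field_simps)
  have S: "(\<Sum>Bs\<in>extensions n m As j. prod_list (map (gB \<alpha> \<theta> M) Bs)) =
      real (K choose j) * (Pg * Q' ^ k) * H ^ j"
    using ext_sum[OF AsNE, of "gB \<alpha> \<theta> (n+m)" n m j] unfolding Gs H_def M_def K_def k_def by simp
  have "pred_K pN \<alpha> \<theta> n As m j = Ws * (real (K choose j) * (Pg * Q' ^ k) * H ^ j) / E"
    unfolding pred_K_def E_def M_def[symmetric]
    by (simp add: efm sum_distrib_left[symmetric] S cong: sum.cong)
  also have "\<dots> = (\<Sum>N. pmf pN N * V_BB \<alpha> \<theta> M K N * (real (K choose j) * (Pg * Q' ^ k) * H ^ j) / E)"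
    unfolding Ws_def by (subst suminf_divide[OF summable_mult2[OF Wsum]]) (subst suminf_mult2[OF Wsum], simp)
  also have "\<dots> = (\<Sum>N. post_N pN \<alpha> \<theta> n As N * wfun \<alpha> \<theta> n (length As) j m N)"
  proof (rule suminf_cong)
    fix N
    have post: "post_N pN \<alpha> \<theta> n As N = pmf pN N * V_BB \<alpha> \<theta> n k N * Pg / E"
      using E_facts(3)[OF a As] by (simp add: k_def Pg_def E_def)
    show "pmf pN N * V_BB \<alpha> \<theta> M K N * (real (K choose j) * (Pg * Q' ^ k) * H ^ j) / E =
        post_N pN \<alpha> \<theta> n As N * wfun \<alpha> \<theta> n (length As) j m N"
    proof (cases "K \<le> N")
      case False
      thus ?thesis by (simp add: V_BB_def wfun_def K_def k_def)
    next
      case True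
      have w: "wfun \<alpha> \<theta> n (length As) j m N = real ((N-k) choose j) * ((Q'-R)/Q')^j * (R/Q')^(N-(k+j))"
        using True by (simp add: wfun_def K_def k_def Q'_def R_def)
      have V1: "V_BB \<alpha> \<theta> M K N = real (N choose (k+j)) * (c/(P*R))^(k+j) * ((P*R)/(Q*Q'))^N"
        using True unfolding V_BB_def PM QM by (simp add: K_def c_def)
      have V2: "V_BB \<alpha> \<theta> n k N = real (N choose k) * (c/P)^k * (P/Q)^N"
        using True unfolding V_BB_def by (simp add: K_def c_def P_def Q_def)
      have ti: "real (N choose (k+j)) * (c/(P*R))^(k+j) * ((P*R)/(Q*Q'))^N * real ((k+j) choose j) * Q'^k * (P*(Q'-R)/c)^j
      = real (N choose k) * (c/P)^k * (P/Q)^N * (real ((N-k) choose j) * ((Q'-R)/Q')^j * (R/Q')^(N-(k+j)))"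
        by (rule term_identity[OF pos(1,2,4,3,5)]) (use True in \<open>simp add: K_def\<close>)
      define X where "X = real (N choose (k+j)) * (c/(P*R))^(k+j) * ((P*R)/(Q*Q'))^N * real ((k+j) choose j) * Q'^k * (P*(Q'-R)/c)^j"
      define Y where "Y = real (N choose k) * (c/P)^k * (P/Q)^N * (real ((N-k) choose j) * ((Q'-R)/Q')^j * (R/Q')^(N-(k+j)))"
      have l: "pmf pN N * V_BB \<alpha> \<theta> M K N * (real (K choose j) * (Pg * Q' ^ k) * H ^ j) / E = pmf pN N * Pg / E * X"
        unfolding V1 Hv X_def by (simp add: divide_inverse mult_ac K_def)
      have r: "post_N pN \<alpha> \<theta> n As N * wfun \<alpha> \<theta> n (length As) j m N = pmf pN N * Pg / E * Y"
        unfolding post w V2 Y_def by (simp add: divide_inverse mult_ac)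
      show ?thesis unfolding l r using ti X_def Y_def by simp
    qed
  qed
  finally show ?thesis .
qed




lemma part2:
  fixes \<alpha> \<theta> :: real
  assumes a: "\<alpha> < 0" "\<theta> > - \<alpha>"
    and As: "\<forall>A\<in>set As. A \<noteq> {} \<and> A \<subseteq> {..<n}" and E: "efpf_mix pN \<alpha> \<theta> n As > 0"
  shows "(\<lambda>m. pred_K pN \<alpha> \<theta> n As m j) \<longlonglongrightarrow> post_N pN \<alpha> \<theta> n As (length As + j)"
proof -
  define k where "k = length As"
  define K where "K = k + j"
  define post where "post = post_N pN \<alpha> \<theta> n As"
  define R where "R = (\<lambda>m. pochhammer (\<theta> + \<alpha> + n) m)"
  define Q' where "Q' = (\<lambda>m. pochhammer (\<theta> + n) m)"
  define \<rho> where "\<rho> = (\<lambda>m. R m / Q' m)"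
  have Rp: "R m > 0" "Q' m > 0" for m using a by (auto simp: R_def Q'_def intro!: pochhammer_pos)
  have RQ: "R m < Q' m" if "m \<ge> 1" for m
    using pochhammer_strict_mono[of "\<theta> + \<alpha> + n" "\<theta> + n" "m - 1"] a that
    by (simp add: R_def Q'_def)
  have \<rho>0: "\<rho> \<longlonglongrightarrow> 0" unfolding \<rho>_def R_def Q'_def
    by (rule pochhammer_ratio_lim) (use a in auto)
  have walt: "wfun \<alpha> \<theta> n k j m N = (if K \<le> N then real ((N - k) choose j) * (1 - \<rho> m) ^ j * \<rho> m ^ (N - K) else 0)" for m N
    using Rp[of m] unfolding wfun_def \<rho>_def K_def R_def Q'_def by (simp add: diff_divide_distrib)
  have wlim: "(\<lambda>m. wfun \<alpha> \<theta> n k j m N) \<longlonglongrightarrow> (if N = K then 1 else 0)" for N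
  proof (cases "K \<le> N")
    case False thus ?thesis unfolding walt by simp
  next
    case True
    have "(\<lambda>m. real ((N - k) choose j) * (1 - \<rho> m) ^ j * \<rho> m ^ (N - K)) \<longlonglongrightarrow>
          real ((N - k) choose j) * (1 - 0) ^ j * 0 ^ (N - K)"
      by (intro tendsto_intros \<rho>0)
    moreover have "real ((N - k) choose j) * (1 - 0) ^ j * (0::real) ^ (N - K) = (if N = K then 1 else 0)"
      using True by (auto simp: K_def)
    ultimately show ?thesis unfolding walt using True by simp
  qed
  have wb: "0 \<le> wfun \<alpha> \<theta> n k j m N \<and> wfun \<alpha> \<theta> n k j m N \<le> 1" if "m \<ge> 1" for m N
  proof -
    have r01: "0 \<le> \<rho> m" "\<rho> m \<le> 1" using Rp[of m] RQ[OF that] by (auto simp: \<rho>_def)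
    show ?thesis
    proof (cases "K \<le> N")
      case True
      have "real ((N - k) choose j) * (1 - \<rho> m) ^ j * \<rho> m ^ (N - k - j) \<le> 1"
        by (rule binom_term_le1[OF r01]) (use True in \<open>simp add: K_def\<close>)
      moreover have "N - k - j = N - K" by (simp add: K_def)
      ultimately show ?thesis unfolding walt using True r01 by simp
    qed (simp add: walt)
  qed
  have pnn: "post N \<ge> 0" for N unfolding post_def by (rule post_nonneg[OF a As E])
  have lim: "((\<lambda>m. post N * wfun \<alpha> \<theta> n k j m N) \<longlongrightarrow> post N * (if N = K then 1 else 0)) sequentially" for N
    by (intro tendsto_mult tendsto_const wlim)
  have sp: "summable post" unfolding post_def by (rule post_summable[OF a As])
  have bd: "\<forall>\<^sub>F (N, m) in sequentially \<times>\<^sub>F sequentially. norm (post N * wfun \<alpha> \<theta> n k j m N) \<le> post N"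
  proof -
    have "norm (post N * wfun \<alpha> \<theta> n k j m N) \<le> post N" if "m \<ge> 1" for m N
      using wb[OF that, of N] pnn[of N] by (simp add: abs_mult mult_left_le)
    thus ?thesis unfolding eventually_prod_sequentially by (intro exI[of _ 1]) auto
  qed
  have T: "(\<lambda>m. \<Sum>N. post N * wfun \<alpha> \<theta> n k j m N) \<longlonglongrightarrow> (\<Sum>N. post N * (if N = K then 1 else 0))"
    using tannerys_theorem[OF lim bd sp] by simp
  have s: "(\<Sum>N. post N * (if N = K then 1 else 0)) = post K"
  proof -
    have "(\<lambda>N. post N * (if N = K then 1 else 0)) = (\<lambda>N. if N = K then post N else 0)" by auto
    thus ?thesis using sums_unique[OF sums_single[of K post]] by simp
  qed
  have ev: "eventually (\<lambda>m. (\<Sum>N. post N * wfun \<alpha> \<theta> n k j m N) = pred_K pN \<alpha> \<theta> n As m j) sequentially"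
    using eventually_ge_at_top[of 1]
    by eventually_elim (simp add: pred_K_repr[OF a As] post_def k_def)
  have "(\<lambda>m. pred_K pN \<alpha> \<theta> n As m j) \<longlonglongrightarrow> post K"
    using tendsto_cong[OF ev] T unfolding s by simp
  thus ?thesis unfolding post_def K_def k_def .
qed




lemma post_shift:
  fixes \<alpha> \<theta> :: real
  assumes a: "\<alpha> < 0" "\<theta> > - \<alpha>"
    and As: "\<forall>A\<in>set As. A \<noteq> {} \<and> A \<subseteq> {..<n}" and E: "efpf_mix pN \<alpha> \<theta> n As > 0"
    and f: "\<And>j. pmf pN (j + length As) * V_BB \<alpha> \<theta> n (length As) (j + length As) = A * t j"
    and t: "t sums T"
  shows "post_N pN \<alpha> \<theta> n As (length As + j) = t j / T"
proof -
  define k where "k = length As"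
  define g where "g = (\<lambda>N. pmf pN N * V_BB \<alpha> \<theta> n k N)"
  have z: "g N = 0" if "N < k" for N using that by (simp add: g_def V_BB_def)
  have "(\<lambda>j. g (j + k)) sums (A * T)" unfolding g_def k_def f by (rule sums_mult[OF t])
  hence "g sums (A * T)" using sums_zero_iff_shift[of k g] z by simp
  hence Eq: "efpf_mix pN \<alpha> \<theta> n As = A * T * prod_list (map (gB \<alpha> \<theta> n) As)"
    unfolding E_facts(2)[OF a As] using sums_unique by (fastforce simp: g_def k_def)
  have "post_N pN \<alpha> \<theta> n As (length As + j) = A * t j * prod_list (map (gB \<alpha> \<theta> n) As) / efpf_mix pN \<alpha> \<theta> n As"
    unfolding E_facts(3)[OF a As] using f[of j] by (simp add: add.commute)
  also have "\<dots> = t j / T" using E unfolding Eq by (auto simp: field_simps)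
  finally show ?thesis .
qed

lemma V_shift:
  "V_BB \<alpha> \<theta> n k (j + k) = real ((j + k) choose k) * (- \<alpha> / pochhammer (\<theta> + \<alpha>) n) ^ k *
     (pochhammer (\<theta> + \<alpha>) n / pochhammer \<theta> n) ^ (j + k)"
  by (simp add: V_BB_def)

lemma part3:
  fixes \<alpha> \<theta> :: real
  assumes a: "\<alpha> < 0" "\<theta> > - \<alpha>"
    and As: "\<forall>A\<in>set As. A \<noteq> {} \<and> A \<subseteq> {..<n}" and E: "efpf_mix pN \<alpha> \<theta> n As > 0"
    and lam: "lam > 0" and pN: "pN = poisson_pmf lam"
  shows "post_N pN \<alpha> \<theta> n As (length As + j) = pmf (poisson_pmf (lam * (1 - p_n \<theta> \<alpha> n))) j"
proof -
  define k where "k = length As"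
  define q where "q = pochhammer (\<theta> + \<alpha>) n / pochhammer \<theta> n"
  define D where "D = (- \<alpha> / pochhammer (\<theta> + \<alpha>) n) ^ k"
  have q: "q > 0" using PQ_facts[OF a, of n] by (simp add: q_def)
  have pq: "1 - p_n \<theta> \<alpha> n = q" by (simp add: p_n_def q_def)
  define A where "A = exp (- lam) * D * (lam * q) ^ k / fact k"
  have f: "pmf pN (i + k) * V_BB \<alpha> \<theta> n k (i + k) = A * ((lam * q) ^ i / fact i)" for i
  proof -
    have b: "real ((i + k) choose k) = fact (i + k) / (fact k * fact i)"
      by (simp add: binomial_fact)
    show ?thesis unfolding pN pmf_poisson[OF lam] V_shift b A_def D_def[symmetric] q_def[symmetric]
      by (simp add: field_simps power_add power_mult_distrib)
  qed
  have t: "(\<lambda>i. (lam * q) ^ i / fact i) sums exp (lam * q)"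
    using exp_converges[of "lam * q"] by (simp add: divide_inverse mult.commute)
  have "post_N pN \<alpha> \<theta> n As (length As + j) = (lam * q) ^ j / fact j / exp (lam * q)"
    by (rule post_shift[OF a As E f[unfolded k_def] t])
  also have "\<dots> = pmf (poisson_pmf (lam * (1 - p_n \<theta> \<alpha> n))) j"
    unfolding pq using lam q by (simp add: pmf_poisson exp_minus field_simps)
  finally show ?thesis .
qed




lemma gchoose_identity:
  fixes n0 :: real
  shows "((real (i + k) + n0 - 1) gchoose (i + k)) * real ((i + k) choose k) =
         ((real k + n0 - 1) gchoose k) * ((real i + (n0 + real k) - 1) gchoose i)"
proof -
  have l: "((real (i + k) + n0 - 1) gchoose (i + k)) = pochhammer n0 (i + k) / fact (i + k)"
    by (simp add: gbinomial_pochhammer')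
  have r1: "((real k + n0 - 1) gchoose k) = pochhammer n0 k / fact k"
    by (simp add: gbinomial_pochhammer')
  have r2: "((real i + (n0 + real k) - 1) gchoose i) = pochhammer (n0 + real k) i / fact i"
    by (simp add: gbinomial_pochhammer')
  have b: "real ((i + k) choose k) = fact (i + k) / (fact k * fact i)"
    by (simp add: binomial_fact)
  have p: "pochhammer n0 (i + k) = pochhammer n0 k * pochhammer (n0 + real k) i"
    using pochhammer_product'[of n0 k i] by (simp add: add.commute)
  show ?thesis unfolding l r1 r2 b p by (simp add: field_simps)
qed

lemma negbin_series:
  fixes x b :: real
  assumes "0 \<le> x" "x < 1"
  shows "(\<lambda>i. ((real i + b - 1) gchoose i) * x ^ i) sums (1 - x) powr (- b)"
proof -
  have "\<bar>-x\<bar> < 1" using assms by simp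
  from gen_binomial_real[OF this, of "- b"]
  have s: "(\<lambda>i. ((- b) gchoose i) * (-x) ^ i) sums (1 + - x) powr (- b)" .
  have "((- b) gchoose i) * (-x) ^ i = ((real i + b - 1) gchoose i) * x ^ i" for i
  proof -
    have e: "((- b) gchoose i) = (-1)^i * ((b + real i - 1) gchoose i)" by (rule gbinomial_minus)
    have "(-x)^i = (-1)^i * x^i" by (rule power_minus)
    moreover have "((-1::real)^i) * (-1)^i = 1" by (simp add: power_mult_distrib[symmetric])
    ultimately show ?thesis unfolding e
      by (metis (no_types, lifting) add.commute mult.assoc mult.commute mult.left_neutral)
  qed
  with s show ?thesis by simp
qed

lemma part4:
  fixes \<alpha> \<theta> n0 \<mu>0 :: real
  assumes a: "\<alpha> < 0" "\<theta> > - \<alpha>"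
    and As: "\<forall>A\<in>set As. A \<noteq> {} \<and> A \<subseteq> {..<n}" and E: "efpf_mix pN \<alpha> \<theta> n As > 0"
    and n0: "n0 > 0" and mu0: "\<mu>0 > 0" and pN: "\<forall>y. pmf pN y = negbin_pmf n0 \<mu>0 y"
  shows "post_N pN \<alpha> \<theta> n As (length As + j)
                 = negbin_pmf (n0 + real (length As))
                     ((n0 + real (length As)) / (n0 / \<mu>0 + p_n \<theta> \<alpha> n) * (1 - p_n \<theta> \<alpha> n)) j"
proof -
  define k where "k = length As"
  define q where "q = pochhammer (\<theta> + \<alpha>) n / pochhammer \<theta> n"
  define D where "D = (- \<alpha> / pochhammer (\<theta> + \<alpha>) n) ^ k"
  define p where "p = n0 / (\<mu>0 + n0)"
  define x where "x = (1 - p) * q"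
  define b where "b = n0 + real k"
  have q: "q > 0" "q \<le> 1" using PQ_facts[OF a, of n] by (simp_all add: q_def)
  have pq: "1 - p_n \<theta> \<alpha> n = q" by (simp add: p_n_def q_def)
  have p: "0 < p" "p < 1" using n0 mu0 by (simp_all add: p_def)
  have x: "0 \<le> x" "x < 1"
  proof -
    show "0 \<le> x" using p q by (simp add: x_def)
    have "x \<le> 1 - p" using p q by (simp add: x_def mult_left_le)
    thus "x < 1" using p by simp
  qed
  define A where "A = ((real k + n0 - 1) gchoose k) * p powr n0 * (1 - p) ^ k * D * q ^ k"
  have f: "pmf pN (i + k) * V_BB \<alpha> \<theta> n k (i + k) = A * (((real i + b - 1) gchoose i) * x ^ i)" for i
  proof -
    have "pmf pN (i + k) * V_BB \<alpha> \<theta> n k (i + k) =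
      (((real (i + k) + n0 - 1) gchoose (i + k)) * real ((i + k) choose k)) * p powr n0 * (1 - p) ^ (i + k) * D * q ^ (i + k)"
      unfolding pN[rule_format] negbin_pmf_def V_shift D_def[symmetric] q_def[symmetric] p_def[symmetric] Let_def
      by (simp add: mult_ac)
    also have "\<dots> = A * (((real i + b - 1) gchoose i) * x ^ i)"
      unfolding gchoose_identity A_def x_def b_def by (simp add: power_add power_mult_distrib mult_ac)
    finally show ?thesis .
  qed
  have "post_N pN \<alpha> \<theta> n As (length As + j) = ((real j + b - 1) gchoose j) * x ^ j / (1 - x) powr (- b)"
    by (rule post_shift[OF a As E f[unfolded k_def] negbin_series[OF x]])
  also have "\<dots> = ((real j + b - 1) gchoose j) * (1 - x) powr b * x ^ j"
    by (simp add: powr_minus divide_inverse)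
  also have "\<dots> = negbin_pmf b (b / (n0 / \<mu>0 + p_n \<theta> \<alpha> n) * (1 - p_n \<theta> \<alpha> n)) j"
  proof -
    have d: "n0 / \<mu>0 + p_n \<theta> \<alpha> n > 0"
    proof -
      have "p_n \<theta> \<alpha> n \<ge> 0" using q pq by simp
      moreover have "n0 / \<mu>0 > 0" using n0 mu0 by simp
      ultimately show ?thesis by simp
    qed
    have bp: "b > 0" using n0 by (simp add: b_def)
    have "b / (b / (n0 / \<mu>0 + p_n \<theta> \<alpha> n) * (1 - p_n \<theta> \<alpha> n) + b) = 1 - x"
    proof -
      have pn: "p_n \<theta> \<alpha> n = 1 - q" using pq by simp
      have d': "n0 / \<mu>0 + (1 - q) > 0" using d pn by simp
      define dd where "dd = n0 / \<mu>0 + (1 - q)"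
      define ee where "ee = n0 / \<mu>0 + 1"
      have dd: "dd > 0" using d' by (simp add: dd_def)
      have ee: "ee > 0" using n0 mu0 unfolding ee_def by (simp add: add_pos_pos)
      have e1: "b / dd * (1 - (1 - q)) + b = b * ee / dd"
        using dd by (simp add: field_simps dd_def ee_def)
      have "b / (b / (n0 / \<mu>0 + (1 - q)) * (1 - (1 - q)) + b) = dd / ee"
        unfolding dd_def[symmetric] e1 using dd ee bp by simp
      also have "\<dots> = (n0 / \<mu>0 + (1 - q)) / (n0 / \<mu>0 + 1)" by (simp add: dd_def ee_def)
      also have "\<dots> = 1 - x"
      proof -
        have h: "\<mu>0 * \<mu>0 + \<mu>0 * n0 \<noteq> 0" "\<mu>0 + n0 \<noteq> 0" using mu0 n0 by (simp_all add: add_pos_pos) (metis add_pos_pos mult_pos_pos less_irrefl)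
        have "(n0 / \<mu>0 + (1 - q)) / (n0 / \<mu>0 + 1) = (n0 + \<mu>0 - \<mu>0 * q) / (n0 + \<mu>0)"
          using mu0 n0 h by (simp add: field_simps)
        also have "\<dots> = 1 - x" unfolding x_def p_def using mu0 n0 h by (simp add: field_simps)
        finally show ?thesis .
      qed
      finally show ?thesis unfolding pn .
    qed
    thus ?thesis unfolding negbin_pmf_def Let_def by (simp add: mult_ac)
  qed
  finally show ?thesis by (simp add: b_def k_def)
qed

theorem proposition8:
  fixes \<alpha> \<theta> :: real and pN :: "nat pmf" and n :: nat and As :: "nat set list"
  assumes "\<alpha> < 0" and "\<theta> > - \<alpha>"
    and "\<forall>A\<in>set As. A \<noteq> {} \<and> A \<subseteq> {..<n}"
    and "efpf_mix pN \<alpha> \<theta> n As > 0"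
  shows "(\<forall>y < length As. post_N pN \<alpha> \<theta> n As y = 0) \<and>
         (\<forall>j. (\<lambda>m. pred_K pN \<alpha> \<theta> n As m j) \<longlonglongrightarrow> post_N pN \<alpha> \<theta> n As (length As + j)) \<and>
         (\<forall>lam > 0. pN = poisson_pmf lam \<longrightarrow>
            (\<forall>j. post_N pN \<alpha> \<theta> n As (length As + j)
                 = pmf (poisson_pmf (lam * (1 - p_n \<theta> \<alpha> n))) j)) \<and>
         (\<forall>n0 \<mu>0. n0 > 0 \<and> \<mu>0 > 0 \<and> (\<forall>y. pmf pN y = negbin_pmf n0 \<mu>0 y) \<longrightarrow>
            (\<forall>j. post_N pN \<alpha> \<theta> n As (length As + j)
                 = negbin_pmf (n0 + real (length As))
                     ((n0 + real (length As)) / (n0 / \<mu>0 + p_n \<theta> \<alpha> n) * (1 - p_n \<theta> \<alpha> n)) j))"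
proof (intro conjI)
  show "\<forall>y < length As. post_N pN \<alpha> \<theta> n As y = 0"
    by (simp add: post_N_def efpf_BB_def V_BB_def)
  show "\<forall>j. (\<lambda>m. pred_K pN \<alpha> \<theta> n As m j) \<longlonglongrightarrow> post_N pN \<alpha> \<theta> n As (length As + j)"
    using part2[OF assms] by blast
  show "\<forall>lam > 0. pN = poisson_pmf lam \<longrightarrow>
            (\<forall>j. post_N pN \<alpha> \<theta> n As (length As + j)
                 = pmf (poisson_pmf (lam * (1 - p_n \<theta> \<alpha> n))) j)"
    using part3[OF assms] by blast
  show "\<forall>n0 \<mu>0. n0 > 0 \<and> \<mu>0 > 0 \<and> (\<forall>y. pmf pN y = negbin_pmf n0 \<mu>0 y) \<longrightarrow>
            (\<forall>j. post_N pN \<alpha> \<theta> n As (length As + j)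
                 = negbin_pmf (n0 + real (length As))
                     ((n0 + real (length As)) / (n0 / \<mu>0 + p_n \<theta> \<alpha> n) * (1 - p_n \<theta> \<alpha> n)) j)"
    using part4[OF assms] by blast
qed

end
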